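(* Let $p > 2$ be a prime and let $z \in \mathbb{Z}/p\mathbb{Z}$. Then there exist $x, y \in \mathbb{Z}/p\mathbb{Z}$ such that $x^2 + y^2 + z^2 - xyz \equiv 0 \pmod p$ if and only if either $z \notin \{2, -2\}$ or $-1$ is a quadratic residue modulo $p$. *)

theory Defs
  imports "HOL-Number_Theory.Number_Theory"
begin

end

theory Submission
  imports Defs
begin

lemma inj_core:
  fixes P c a b q :: int
  assumes pr: "prime P" and odd: "P = 2*q + 1" and nd: "\<not> P dvd c"
    and a: "0 \<le> a" "a \<le> q" and b: "0 \<le> b" "b \<le> q"
    and d: "P dvd c * (a^2 - b^2)"
  shows "a = b"
proof (rule ccontr)
  assume ne: "a \<noteq> b"
  have "P dvd (a^2 - b^2)" using d nd pr by (simp add: prime_dvd_mult_iff)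
  moreover have "a^2 - b^2 = (a - b) * (a + b)" by (simp add: power2_eq_square algebra_simps)
  ultimately have o: "P dvd (a - b) \<or> P dvd (a + b)" using pr by (simp add: prime_dvd_mult_iff)
  have P2: "P \<ge> 2" using pr prime_ge_2_int by blast
  have n1: "a - b \<noteq> 0" using ne by simp
  have n2: "a + b \<noteq> 0" using ne a b by linarith
  show False
  proof (cases "P dvd (a - b)")
    case True
    have "\<bar>P\<bar> \<le> \<bar>a - b\<bar>" using dvd_imp_le_int[OF n1 True] .
    then show False using a b P2 odd by linarith
  next
    case False
    then have T: "P dvd (a + b)" using o by blast
    have "\<bar>P\<bar> \<le> \<bar>a + b\<bar>" using dvd_imp_le_int[OF n2 T] .
    then show False using a b P2 odd by linarith
  qed
qed

lemma pigeon:
  fixes P c d :: int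
  assumes pr: "prime P" and odd: "odd P" and nd: "\<not> P dvd c"
  shows "\<exists>a b. P dvd (c * a^2 + d - b^2)"
proof (rule ccontr)
  assume H: "\<not> ?thesis"
  define q where "q = P div 2"
  have P2: "P \<ge> 2" using pr prime_ge_2_int by blast
  have q2: "P = 2 * q + 1" unfolding q_def using odd by (simp add: odd_two_times_div_two_succ)
  define S where "S = {0..q}"
  define f where "f a = (c * a^2 + d) mod P" for a
  define g where "g b = b^2 mod P" for b
  have injf: "inj_on f S"
  proof (rule inj_onI)
    fix a b assume ab: "a \<in> S" "b \<in> S" "f a = f b"
    then have "P dvd (c * a^2 + d) - (c * b^2 + d)" unfolding f_def by (simp add: mod_eq_dvd_iff)
    then have "P dvd c * (a^2 - b^2)" by (simp add: algebra_simps)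
    then show "a = b" using inj_core[OF pr q2 nd] ab unfolding S_def by simp
  qed
  have n1: "\<not> P dvd 1" using P2 by (simp add: zdvd_imp_le)
  have injg: "inj_on g S"
  proof (rule inj_onI)
    fix a b assume ab: "a \<in> S" "b \<in> S" "g a = g b"
    then have "P dvd a^2 - b^2" unfolding g_def by (simp add: mod_eq_dvd_iff)
    then have "P dvd 1 * (a^2 - b^2)" by simp
    then show "a = b" using inj_core[OF pr q2 n1] ab unfolding S_def by simp
  qed
  have disj: "f ` S \<inter> g ` S = {}"
  proof (rule ccontr)
    assume "f ` S \<inter> g ` S \<noteq> {}"
    then obtain a b where "f a = g b" by auto
    then have "P dvd (c * a^2 + d - b^2)" unfolding f_def g_def by (simp add: mod_eq_dvd_iff)
    then show False using H by blast
  qed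
  have sub: "f ` S \<union> g ` S \<subseteq> {0..<P}" unfolding f_def g_def using P2 by auto
  have cS: "card S = nat (q + 1)" unfolding S_def by simp
  have fin: "finite S" unfolding S_def by simp
  have "card (f ` S \<union> g ` S) = card (f ` S) + card (g ` S)"
    using disj fin by (simp add: card_Un_disjoint)
  also have "\<dots> = 2 * nat (q + 1)" using card_image[OF injf] card_image[OF injg] cS by simp
  finally have "card (f ` S \<union> g ` S) = 2 * nat (q + 1)" .
  moreover have "card (f ` S \<union> g ` S) \<le> card {0..<P}" using card_mono[OF _ sub] by simp
  ultimately show False using q2 P2 by simp
qed

theorem lemma1:
  fixes p :: nat and z :: int
  assumes "prime p" and "p > 2"
  shows "(\<exists>x y :: int. [x^2 + y^2 + z^2 - x*y*z = 0] (mod int p)) \<longleftrightarrow>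
         ((\<not> [z = 2] (mod int p) \<and> \<not> [z = -2] (mod int p)) \<or> QuadRes (int p) (-1))"
  (is "?L \<longleftrightarrow> ?R")
proof -
  define P where "P = int p"
  have pr: "prime P" unfolding P_def using assms(1) by simp
  have P3: "P \<ge> 3" unfolding P_def using assms(2) by simp
  have odd: "odd P" using prime_odd_int[OF pr] P3 by simp
  have n4: "\<not> P dvd 4"
  proof
    assume "P dvd 4"
    then have "P \<le> 4" by (simp add: zdvd_imp_le)
    then have "P = 3 \<or> P = 4" using P3 by auto
    then show False using \<open>P dvd 4\<close> odd by auto
  qed
  define h where "h = (P + 1) div 2"
  have h2: "2 * h = P + 1" unfolding h_def using odd by (metis add.commute dvd_mult_div_cancel even_plus_one_iff)
  have half: "P dvd t^2 + 1" if "P dvd s^2 + 4" and "t = s * h" for s t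
  proof -
    have "4 * (t^2 + 1) = (2*h)^2 * s^2 + 4" using that(2) by (simp add: power2_eq_square algebra_simps)
    also have "\<dots> = (s^2 + 4) + P * (s^2 * (P + 2))" unfolding h2 by (simp add: power2_eq_square algebra_simps)
    finally have eq: "4 * (t^2 + 1) = (s^2 + 4) + P * (s^2 * (P + 2))" .
    have "P dvd (s^2 + 4) + P * (s^2 * (P + 2))" by (rule dvd_add[OF that(1)]) simp
    then have "P dvd 4 * (t^2 + 1)" by (simp only: eq)
    then show ?thesis using pr n4 prime_dvd_mult_iff by blast
  qed
  show ?thesis
  proof
    assume ?L
    then obtain x y where "[x^2 + y^2 + z^2 - x*y*z = 0] (mod P)" unfolding P_def by blast
    then have E: "P dvd x^2 + y^2 + z^2 - x*y*z" by (simp add: cong_iff_dvd_diff)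
    show ?R
    proof (cases "[z = 2] (mod P) \<or> [z = -2] (mod P)")
      case False then show ?thesis unfolding P_def by blast
    next
      case True
      have "\<exists>s. P dvd s^2 + 4"
      proof (cases "[z = 2] (mod P)")
        case True
        then have d: "P dvd z - 2" by (simp add: cong_iff_dvd_diff)
        have "(x - y)^2 + 4 = (x^2 + y^2 + z^2 - x*y*z) - (z - 2) * (z + 2 - x*y)"
          by (simp add: power2_eq_square algebra_simps)
        then have "P dvd (x - y)^2 + 4" using E d by (metis dvd_diff dvd_mult2)
        then show ?thesis by blast
      next
        case False
        then have "[z = -2] (mod P)" using True by blast
        then have d: "P dvd z + 2" by (simp add: cong_iff_dvd_diff)
        have "(x + y)^2 + 4 = (x^2 + y^2 + z^2 - x*y*z) - (z + 2) * (z - 2 - x*y)"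
          by (simp add: power2_eq_square algebra_simps)
        then have "P dvd (x + y)^2 + 4" using E d by (metis dvd_diff dvd_mult2)
        then show ?thesis by blast
      qed
      then obtain s where "P dvd s^2 + 4" by blast
      then have "P dvd (s*h)^2 + 1" using half by blast
      then have "[(s*h)^2 = -1] (mod P)" by (simp add: cong_iff_dvd_diff)
      then show ?thesis unfolding QuadRes_def P_def by blast
    qed
  next
    assume ?R
    show ?L
    proof (cases "QuadRes P (-1)")
      case True
      then obtain i where "[i^2 = -1] (mod P)" unfolding QuadRes_def by blast
      then have "P dvd i^2 + 1" by (simp add: cong_iff_dvd_diff)
      moreover have "(i*z)^2 + 0^2 + z^2 - (i*z)*0*z = z^2 * (i^2 + 1)" by (simp add: power2_eq_square algebra_simps)
      ultimately have "P dvd (i*z)^2 + 0^2 + z^2 - (i*z)*0*z" by simp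
      then show ?thesis unfolding P_def by (metis cong_iff_dvd_diff diff_zero)
    next
      case False
      then have n2: "\<not> P dvd z - 2" "\<not> P dvd z + 2" using \<open>?R\<close> unfolding P_def
        by (auto simp: cong_iff_dvd_diff)
      have "\<not> P dvd (z - 2) * (z + 2)" using n2 pr by (simp add: prime_dvd_mult_iff)
      moreover have "(z - 2) * (z + 2) = z^2 - 4" by (simp add: power2_eq_square algebra_simps)
      ultimately have nd: "\<not> P dvd z^2 - 4" by simp
      obtain a b where ab: "P dvd ((z^2 - 4) * a^2 + (- 4 * z^2) - b^2)" using pigeon[OF pr odd nd] by blast
      define x where "x = (z*a + b) * h"
      have "2 * x = (z*a + b) * (2 * h)" unfolding x_def by (simp add: algebra_simps)
      then have "2 * x = (z*a + b) * (P + 1)" unfolding h2 .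
      then have e1: "2 * x - z * a = b + (z*a + b) * P" by (simp add: algebra_simps)
      have "4 * (x^2 + a^2 + z^2 - x*a*z) = (2*x - z*a)^2 - ((z^2 - 4) * a^2 + (- 4 * z^2))"
        by (simp add: power2_eq_square algebra_simps)
      also have "\<dots> = (b^2 - ((z^2 - 4) * a^2 + (- 4 * z^2))) + P * ((z*a+b) * (2*b + (z*a+b)*P))"
        unfolding e1 by (simp add: power2_eq_square algebra_simps)
      finally have eq: "4 * (x^2 + a^2 + z^2 - x*a*z) = (b^2 - ((z^2 - 4) * a^2 + (- 4 * z^2))) + P * ((z*a+b) * (2*b + (z*a+b)*P))" .
      have "P dvd - ((z^2 - 4) * a^2 + (- 4 * z^2) - b^2)" using ab by (simp only: dvd_minus_iff)
      then have bd: "P dvd (b^2 - ((z^2 - 4) * a^2 + (- 4 * z^2)))" by (simp add: algebra_simps)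
      have "P dvd (b^2 - ((z^2 - 4) * a^2 + (- 4 * z^2))) + P * ((z*a+b) * (2*b + (z*a+b)*P))"
        by (rule dvd_add[OF bd]) simp
      then have "P dvd 4 * (x^2 + a^2 + z^2 - x*a*z)" by (simp only: eq)
      then have "P dvd x^2 + a^2 + z^2 - x*a*z" using pr n4 prime_dvd_mult_iff by blast
      then show ?thesis unfolding P_def by (metis cong_iff_dvd_diff diff_zero)
    qed
  qed
qed

end
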